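(* Let $\Delta$ be the closed triangle in the Euclidean plane with side lengths $100$, $100$ and $90$. Then there exist $16$ closed rectangles, each of size $20\times 10$, all contained in $\Delta$ and with pairwise disjoint interiors.
   Context: Rectangles may be placed at any position and with any orientation in the plane (they need not be parallel to one another or to any side of the triangle). *)

theory Defs
  imports "HOL-Analysis.Analysis"
begin

text \<open>Every closed a x b rectangle in the plane, at any
position and orientation, has this form for some z and some w with norm 1.\<close>
definition rect :: "complex \<Rightarrow> complex \<Rightarrow> real \<Rightarrow> real \<Rightarrow> complex set" where
  "rect z w a b = {z + of_real s * w + of_real t * (\<i> * w) | s t.
      0 \<le> s \<and> s \<le> a \<and> 0 \<le> t \<and> t \<le> b}"

text \<open>Vertices of the isosceles triangle with sides 100, 100, 90:
base from (-45,0) to (45,0), apex at (0, sqrt 7975), since 100^2 - 45^2 = 7975.\<close>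
definition triA :: complex where "triA = Complex (-45) 0"
definition triB :: complex where "triB = Complex 45 0"
definition triC :: complex where "triC = Complex 0 (sqrt 7975)"

definition Delta :: "complex set" where
  "Delta = convex hull {triA, triB, triC}"

end

theory Submission imports Defs begin


lemma rect_half:
  assumes "n1*Re z + n2*Im z + max 0 (a*(n1*Re w + n2*Im w)) + max 0 (b*(n2*Re w - n1*Im w)) \<le> c"
    "0 \<le> a" "0 \<le> b"
  shows "rect z w a b \<subseteq> {p. n1*Re p + n2*Im p \<le> c}"
proof
  fix p assume "p \<in> rect z w a b"
  then obtain s t where p: "p = z + of_real s * w + of_real t * (\<i> * w)" and st: "0 \<le> s" "s \<le> a" "0 \<le> t" "t \<le> b"
    unfolding rect_def by blast
  have e: "n1*Re p + n2*Im p = n1*Re z + n2*Im z + s*(n1*Re w + n2*Im w) + t*(n2*Re w - n1*Im w)"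
    unfolding p by (simp add: algebra_simps)
  have 1: "s*(n1*Re w + n2*Im w) \<le> max 0 (a*(n1*Re w + n2*Im w))"
  proof (cases "n1*Re w + n2*Im w \<ge> 0")
    case True then show ?thesis using st mult_right_mono by fastforce
  next
    case False then show ?thesis using st by (simp add: mult_nonneg_nonpos)
  qed
  have 2: "t*(n2*Re w - n1*Im w) \<le> max 0 (b*(n2*Re w - n1*Im w))"
  proof (cases "n2*Re w - n1*Im w \<ge> 0")
    case True then show ?thesis using st mult_right_mono by fastforce
  next
    case False then show ?thesis using st by (simp add: mult_nonneg_nonpos)
  qed
  show "p \<in> {p. n1*Re p + n2*Im p \<le> c}" using e 1 2 assms(1) by simp
qed

lemma interior_half: "(n1,n2) \<noteq> (0,0) \<Longrightarrow> interior {p::complex. n1*Re p + n2*Im p \<le> c} = {p. n1*Re p + n2*Im p < c}"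
proof -
  assume a: "(n1,n2) \<noteq> (0,0)"
  have "{p::complex. n1*Re p + n2*Im p \<le> c} = {p. Complex n1 n2 \<bullet> p \<le> c}"
    by (simp add: inner_complex_def)
  moreover have "{p::complex. n1*Re p + n2*Im p < c} = {p. Complex n1 n2 \<bullet> p < c}"
    by (simp add: inner_complex_def)
  moreover have "Complex n1 n2 \<noteq> 0" using a by (auto simp: complex_eq_iff)
  ultimately show ?thesis using interior_halfspace_le by simp
qed

lemma disj_rect:
  assumes "na*Re z1 + nb*Im z1 + max 0 (20*(na*Re w1 + nb*Im w1)) + max 0 (10*(nb*Re w1 - na*Im w1)) \<le> c"
    "(-na)*Re z2 + (-nb)*Im z2 + max 0 (20*((-na)*Re w2 + (-nb)*Im w2)) + max 0 (10*((-nb)*Re w2 - (-na)*Im w2)) \<le> -c"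
    "(na,nb) \<noteq> (0,0)"
  shows "interior (rect z1 w1 20 10) \<inter> interior (rect z2 w2 20 10) = {}"
proof -
  have A: "interior (rect z1 w1 20 10) \<subseteq> {p. na*Re p + nb*Im p < c}"
    using interior_mono[OF rect_half[OF assms(1)]] interior_half[OF assms(3)] by simp
  have "(-na,-nb) \<noteq> (0,0)" using assms(3) by auto
  then have B: "interior (rect z2 w2 20 10) \<subseteq> {p. (-na)*Re p + (-nb)*Im p < -c}"
    using interior_mono[OF rect_half[OF assms(2)]] interior_half by (metis (no_types) order.refl zero_le_numeral)
  show ?thesis
  proof (rule equals0I)
    fix x assume "x \<in> interior (rect z1 w1 20 10) \<inter> interior (rect z2 w2 20 10)"
    then have "na*Re x + nb*Im x < c" "-(na*Re x) - nb*Im x < -c" using A B by auto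
    then show False by linarith
  qed
qed

definition T :: "complex set" where
  "T = {p. -Im p \<le> 0 \<and> 893028*Re p + 450000*Im p \<le> 40186260 \<and> -893028*Re p + 450000*Im p \<le> 40186260}"

lemma T_Delta: "T \<subseteq> Delta"
proof
  fix p assume "p \<in> T"
  then have h: "0 \<le> Im p" "893028*Re p + 450000*Im p \<le> 40186260" "-893028*Re p + 450000*Im p \<le> 40186260" unfolding T_def by auto
  define C' where "C' = Complex 0 (893028/10000)"
  have s: "893028/10000 \<le> sqrt 7975"
    by (rule real_le_rsqrt) (simp add: power2_eq_square)
  define lam where "lam = 893028/10000 / sqrt 7975"
  have l: "0 \<le> lam" "lam \<le> 1" unfolding lam_def using s by auto
  have C: "C' = ((1-lam)/2) *\<^sub>R triA + ((1-lam)/2) *\<^sub>R triB + lam *\<^sub>R triC"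
    unfolding C'_def lam_def triA_def triB_def triC_def using s by (simp add: complex_eq_iff)
  define c where "c = Im p / (893028/10000)"
  define u where "u = (1-c)/2 - Re p/90"
  define v where "v = (1-c)/2 + Re p/90"
  have uvc: "0 \<le> u" "0 \<le> v" "0 \<le> c" using h unfolding u_def v_def c_def by (auto simp: field_simps)
  have pe: "p = u *\<^sub>R triA + v *\<^sub>R triB + c *\<^sub>R C'"
    unfolding u_def v_def c_def C'_def triA_def triB_def by (simp add: complex_eq_iff field_simps)
  have "p = (u + c*(1-lam)/2) *\<^sub>R triA + (v + c*(1-lam)/2) *\<^sub>R triB + (c*lam) *\<^sub>R triC"
    unfolding pe C by (simp add: algebra_simps scaleR_add_right)
  moreover have "u + c*(1-lam)/2 + (v + c*(1-lam)/2) + c*lam = 1" unfolding u_def v_def by (simp add: field_simps)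
  moreover have "0 \<le> u + c*(1-lam)/2" "0 \<le> v + c*(1-lam)/2" "0 \<le> c*lam" using uvc l by auto
  ultimately show "p \<in> Delta" unfolding Delta_def convex_hull_3 by blast
qed

lemma rect_Delta:
  assumes "-Im z + max 0 (20*(- Im w)) + max 0 (10*(- Re w)) \<le> 0"
   "893028*Re z + 450000*Im z + max 0 (20*(893028*Re w + 450000*Im w)) + max 0 (10*(450000*Re w - 893028*Im w)) \<le> 40186260"
   "(-893028)*Re z + 450000*Im z + max 0 (20*((-893028)*Re w + 450000*Im w)) + max 0 (10*(450000*Re w - (-893028)*Im w)) \<le> 40186260"
  shows "rect z w 20 10 \<subseteq> Delta"
proof -
  have "rect z w 20 10 \<subseteq> {p. 0*Re p + (-1)*Im p \<le> 0}" by (rule rect_half) (use assms(1) in simp_all)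
  moreover have "rect z w 20 10 \<subseteq> {p. 893028*Re p + 450000*Im p \<le> 40186260}" by (rule rect_half) (use assms(2) in simp_all)
  moreover have "rect z w 20 10 \<subseteq> {p. (-893028)*Re p + 450000*Im p \<le> 40186260}" by (rule rect_half[OF assms(3)]) simp_all
  ultimately have "rect z w 20 10 \<subseteq> T" unfolding T_def by auto
  then show ?thesis using T_Delta by blast
qed


definition z0 :: complex where "z0 = Complex (-312889/20000) (3939/100000)"
definition w0 :: complex where "w0 = Complex (9999931879/10000068121) (52200000/10000068121)"
lemma n0: "norm w0 = 1" by (simp add: w0_def cmod_def power2_eq_square)
lemma c0: "rect z0 w0 20 10 \<subseteq> Delta" by (rule rect_Delta) (simp_all add: z0_def w0_def)
definition z1 :: complex where "z1 = Complex (104941/50000) (890299/50000)"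
definition w1 :: complex where "w1 = Complex (6263000839/13736999161) (-12226200000/13736999161)"
lemma n1: "norm w1 = 1" by (simp add: w1_def cmod_def power2_eq_square)
lemma c1: "rect z1 w1 20 10 \<subseteq> Delta" by (rule rect_Delta) (simp_all add: z1_def w1_def)
definition z2 :: complex where "z2 = Complex (618571/25000) (1794297/100000)"
definition w2 :: complex where "w2 = Complex (61423479/138576521) (-124220000/138576521)"
lemma n2: "norm w2 = 1" by (simp add: w2_def cmod_def power2_eq_square)
lemma c2: "rect z2 w2 20 10 \<subseteq> Delta" by (rule rect_Delta) (simp_all add: z2_def w2_def)
definition z3 :: complex where "z3 = Complex (-22423/1000) (7007/50000)"
definition w3 :: complex where "w3 = Complex (6419054719/13580945281) (11968200000/13580945281)"
lemma n3: "norm w3 = 1" by (simp add: w3_def cmod_def power2_eq_square)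
lemma c3: "rect z3 w3 20 10 \<subseteq> Delta" by (rule rect_Delta) (simp_all add: z3_def w3_def)
definition z4 :: complex where "z4 = Complex (-838827/25000) (2259/5000)"
definition w4 :: complex where "w4 = Complex (6201373311/13798626689) (12326600000/13798626689)"
lemma n4: "norm w4 = 1" by (simp add: w4_def cmod_def power2_eq_square)
lemma c4: "rect z4 w4 20 10 \<subseteq> Delta" by (rule rect_Delta) (simp_all add: z4_def w4_def)
definition z5 :: complex where "z5 = Complex (1307713/100000) (915977/50000)"
definition w5 :: complex where "w5 = Complex (6263000839/13736999161) (-12226200000/13736999161)"
lemma n5: "norm w5 = 1" by (simp add: w5_def cmod_def power2_eq_square)
lemma c5: "rect z5 w5 20 10 \<subseteq> Delta" by (rule rect_Delta) (simp_all add: z5_def w5_def)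
definition z6 :: complex where "z6 = Complex (-1494569/100000) (596857/20000)"
definition w6 :: complex where "w6 = Complex (697233319/4302766681) (-4245900000/4302766681)"
lemma n6: "norm w6 = 1" by (simp add: w6_def cmod_def power2_eq_square)
lemma c6: "rect z6 w6 20 10 \<subseteq> Delta" by (rule rect_Delta) (simp_all add: z6_def w6_def)
definition z7 :: complex where "z7 = Complex (-21834/3125) (1781719/50000)"
definition w7 :: complex where "w7 = Complex (62631231/137368769) (-122260000/137368769)"
lemma n7: "norm w7 = 1" by (simp add: w7_def cmod_def power2_eq_square)
lemma c7: "rect z7 w7 20 10 \<subseteq> Delta" by (rule rect_Delta) (simp_all add: z7_def w7_def)
definition z8 :: complex where "z8 = Complex (782489/50000) (720363/20000)"
definition w8 :: complex where "w8 = Complex (6112103391/13887896609) (-12470600000/13887896609)"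
lemma n8: "norm w8 = 1" by (simp add: w8_def cmod_def power2_eq_square)
lemma c8: "rect z8 w8 20 10 \<subseteq> Delta" by (rule rect_Delta) (simp_all add: z8_def w8_def)
definition z9 :: complex where "z9 = Complex (-612459/25000) (1829313/100000)"
definition w9 :: complex where "w9 = Complex (6515104911/13484895089) (11806600000/13484895089)"
lemma n9: "norm w9 = 1" by (simp add: w9_def cmod_def power2_eq_square)
lemma c9: "rect z9 w9 20 10 \<subseteq> Delta" by (rule rect_Delta) (simp_all add: z9_def w9_def)
definition z10 :: complex where "z10 = Complex (182249/50000) (739929/20000)"
definition w10 :: complex where "w10 = Complex (6244393911/13755606089) (-12256600000/13755606089)"
lemma n10: "norm w10 = 1" by (simp add: w10_def cmod_def power2_eq_square)
lemma c10: "rect z10 w10 20 10 \<subseteq> Delta" by (rule rect_Delta) (simp_all add: z10_def w10_def)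
definition z11 :: complex where "z11 = Complex (-167577/25000) (1791323/50000)"
definition w11 :: complex where "w11 = Complex (9426924279/10573075721) (4787800000/10573075721)"
lemma n11: "norm w11 = 1" by (simp add: w11_def cmod_def power2_eq_square)
lemma c11: "rect z11 w11 20 10 \<subseteq> Delta" by (rule rect_Delta) (simp_all add: z11_def w11_def)
definition z12 :: complex where "z12 = Complex (327187/50000) (5395277/100000)"
definition w12 :: complex where "w12 = Complex (9963151/22036849) (-19656000/22036849)"
lemma n12: "norm w12 = 1" by (simp add: w12_def cmod_def power2_eq_square)
lemma c12: "rect z12 w12 20 10 \<subseteq> Delta" by (rule rect_Delta) (simp_all add: z12_def w12_def)
definition z13 :: complex where "z13 = Complex (-372533/25000) (150013/4000)"
definition w13 :: complex where "w13 = Complex (6212705319/13787294681) (12308200000/13787294681)"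
lemma n13: "norm w13 = 1" by (simp add: w13_def cmod_def power2_eq_square)
lemma c13: "rect z13 w13 20 10 \<subseteq> Delta" by (rule rect_Delta) (simp_all add: z13_def w13_def)
definition z14 :: complex where "z14 = Complex (-51357/20000) (2457407/50000)"
definition w14 :: complex where "w14 = Complex (2344573911/2655426089) (1246700000/2655426089)"
lemma n14: "norm w14 = 1" by (simp add: w14_def cmod_def power2_eq_square)
lemma c14: "rect z14 w14 20 10 \<subseteq> Delta" by (rule rect_Delta) (simp_all add: z14_def w14_def)
definition z15 :: complex where "z15 = Complex (-677/200) (1506937/25000)"
definition w15 :: complex where "w15 = Complex (1549079431/3450920569) (3083700000/3450920569)"
lemma n15: "norm w15 = 1" by (simp add: w15_def cmod_def power2_eq_square)
lemma c15: "rect z15 w15 20 10 \<subseteq> Delta" by (rule rect_Delta) (simp_all add: z15_def w15_def)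
lemma p0_1: "interior (rect z0 w0 20 10) \<inter> interior (rect z1 w1 20 10) = {}"
  by (rule disj_rect[where na="(12226200000)" and nb="(6263000839)" and c="(126659729504)"]) (simp_all add: z0_def w0_def z1_def w1_def)
lemma p0_2: "interior (rect z0 w0 20 10) \<inter> interior (rect z2 w2 20 10) = {}"
  by (rule disj_rect[where na="(124220000)" and nb="(61423479)" and c="(2666631010)"]) (simp_all add: z0_def w0_def z2_def w2_def)
lemma p0_3: "interior (rect z0 w0 20 10) \<inter> interior (rect z3 w3 20 10) = {}"
  by (rule disj_rect[where na="(-11968200000)" and nb="(6419054719)" and c="(260782838210)"]) (simp_all add: z0_def w0_def z3_def w3_def)
lemma p0_4: "interior (rect z0 w0 20 10) \<inter> interior (rect z4 w4 20 10) = {}"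
  by (rule disj_rect[where na="(-12326600000)" and nb="(6201373311)" and c="(336070329110)"]) (simp_all add: z0_def w0_def z4_def w4_def)
lemma p0_5: "interior (rect z0 w0 20 10) \<inter> interior (rect z5 w5 20 10) = {}"
  by (rule disj_rect[where na="(12226200000)" and nb="(6263000839)" and c="(195379449720)"]) (simp_all add: z0_def w0_def z5_def w5_def)
lemma p0_6: "interior (rect z0 w0 20 10) \<inter> interior (rect z6 w6 20 10) = {}"
  by (rule disj_rect[where na="(-52200000)" and nb="(9999931879)" and c="(101446641802)"]) (simp_all add: z0_def w0_def z6_def w6_def)
lemma p0_7: "interior (rect z0 w0 20 10) \<inter> interior (rect z7 w7 20 10) = {}"
  by (rule disj_rect[where na="(-52200000)" and nb="(9999931879)" and c="(139719954331)"]) (simp_all add: z0_def w0_def z7_def w7_def)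
lemma p0_8: "interior (rect z0 w0 20 10) \<inter> interior (rect z8 w8 20 10) = {}"
  by (rule disj_rect[where na="(12470600000)" and nb="(6112103391)" and c="(265484911170)"]) (simp_all add: z0_def w0_def z8_def w8_def)
lemma p0_9: "interior (rect z0 w0 20 10) \<inter> interior (rect z9 w9 20 10) = {}"
  by (rule disj_rect[where na="(-11806600000)" and nb="(6515104911)" and c="(329577426718)"]) (simp_all add: z0_def w0_def z9_def w9_def)
lemma p0_10: "interior (rect z0 w0 20 10) \<inter> interior (rect z10 w10 20 10) = {}"
  by (rule disj_rect[where na="(12256600000)" and nb="(6244393911)" and c="(195888769283)"]) (simp_all add: z0_def w0_def z10_def w10_def)
lemma p0_11: "interior (rect z0 w0 20 10) \<inter> interior (rect z11 w11 20 10) = {}"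
  by (rule disj_rect[where na="(-52200000)" and nb="(9999931879)" and c="(229911639529)"]) (simp_all add: z0_def w0_def z11_def w11_def)
lemma p0_12: "interior (rect z0 w0 20 10) \<inter> interior (rect z12 w12 20 10) = {}"
  by (rule disj_rect[where na="(-52200000)" and nb="(9999931879)" and c="(230765379435)"]) (simp_all add: z0_def w0_def z12_def w12_def)
lemma p0_13: "interior (rect z0 w0 20 10) \<inter> interior (rect z13 w13 20 10) = {}"
  by (rule disj_rect[where na="(-52200000)" and nb="(9999931879)" and c="(238509506481)"]) (simp_all add: z0_def w0_def z13_def w13_def)
lemma p0_14: "interior (rect z0 w0 20 10) \<inter> interior (rect z14 w14 20 10) = {}"
  by (rule disj_rect[where na="(-52200000)" and nb="(9999931879)" and c="(296411656283)"]) (simp_all add: z0_def w0_def z14_def w14_def)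
lemma p0_15: "interior (rect z0 w0 20 10) \<inter> interior (rect z15 w15 20 10) = {}"
  by (rule disj_rect[where na="(-52200000)" and nb="(9999931879)" and c="(352079304827)"]) (simp_all add: z0_def w0_def z15_def w15_def)
lemma p1_2: "interior (rect z1 w1 20 10) \<inter> interior (rect z2 w2 20 10) = {}"
  by (rule disj_rect[where na="(124220000)" and nb="(61423479)" and c="(3477526080)"]) (simp_all add: z1_def w1_def z2_def w2_def)
lemma p1_3: "interior (rect z1 w1 20 10) \<inter> interior (rect z3 w3 20 10) = {}"
  by (rule disj_rect[where na="(-12226200000)" and nb="(-6263000839)" and c="(-44934518157)"]) (simp_all add: z1_def w1_def z3_def w3_def)
lemma p1_4: "interior (rect z1 w1 20 10) \<inter> interior (rect z4 w4 20 10) = {}"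
  by (rule disj_rect[where na="(-12326600000)" and nb="(6201373311)" and c="(250473695463)"]) (simp_all add: z1_def w1_def z4_def w4_def)
lemma p1_5: "interior (rect z1 w1 20 10) \<inter> interior (rect z5 w5 20 10) = {}"
  by (rule disj_rect[where na="(12226200000)" and nb="(6263000839)" and c="(274584176785)"]) (simp_all add: z1_def w1_def z5_def w5_def)
lemma p1_6: "interior (rect z1 w1 20 10) \<inter> interior (rect z6 w6 20 10) = {}"
  by (rule disj_rect[where na="(-4245900000)" and nb="(-697233319)" and c="(-10851746682)"]) (simp_all add: z1_def w1_def z6_def w6_def)
lemma p1_7: "interior (rect z1 w1 20 10) \<inter> interior (rect z7 w7 20 10) = {}"
  by (rule disj_rect[where na="(-6263000839)" and nb="(12226200000)" and c="(204623235061)"]) (simp_all add: z1_def w1_def z7_def w7_def)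
lemma p1_8: "interior (rect z1 w1 20 10) \<inter> interior (rect z8 w8 20 10) = {}"
  by (rule disj_rect[where na="(12226200000)" and nb="(6263000839)" and c="(343303657043)"]) (simp_all add: z1_def w1_def z8_def w8_def)
lemma p1_9: "interior (rect z1 w1 20 10) \<inter> interior (rect z9 w9 20 10) = {}"
  by (rule disj_rect[where na="(-11806600000)" and nb="(6515104911)" and c="(249825948904)"]) (simp_all add: z1_def w1_def z9_def w9_def)
lemma p1_10: "interior (rect z1 w1 20 10) \<inter> interior (rect z10 w10 20 10) = {}"
  by (rule disj_rect[where na="(12226200000)" and nb="(6263000839)" and c="(275107457982)"]) (simp_all add: z1_def w1_def z10_def w10_def)
lemma p1_11: "interior (rect z1 w1 20 10) \<inter> interior (rect z11 w11 20 10) = {}"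
  by (rule disj_rect[where na="(-4787800000)" and nb="(9426924279)" and c="(264000144865)"]) (simp_all add: z1_def w1_def z11_def w11_def)
lemma p1_12: "interior (rect z1 w1 20 10) \<inter> interior (rect z12 w12 20 10) = {}"
  by (rule disj_rect[where na="(12226200000)" and nb="(6263000839)" and c="(345643156044)"]) (simp_all add: z1_def w1_def z12_def w12_def)
lemma p1_13: "interior (rect z1 w1 20 10) \<inter> interior (rect z13 w13 20 10) = {}"
  by (rule disj_rect[where na="(-6263000839)" and nb="(12226200000)" and c="(378201888034)"]) (simp_all add: z1_def w1_def z13_def w13_def)
lemma p1_14: "interior (rect z1 w1 20 10) \<inter> interior (rect z14 w14 20 10) = {}"
  by (rule disj_rect[where na="(-6263000839)" and nb="(12226200000)" and c="(410765998614)"]) (simp_all add: z1_def w1_def z14_def w14_def)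
lemma p1_15: "interior (rect z1 w1 20 10) \<inter> interior (rect z15 w15 20 10) = {}"
  by (rule disj_rect[where na="(-6263000839)" and nb="(12226200000)" and c="(481359672536)"]) (simp_all add: z1_def w1_def z15_def w15_def)
lemma p2_3: "interior (rect z2 w2 20 10) \<inter> interior (rect z3 w3 20 10) = {}"
  by (rule disj_rect[where na="(-124220000)" and nb="(-61423479)" and c="(-1827870816)"]) (simp_all add: z2_def w2_def z3_def w3_def)
lemma p2_4: "interior (rect z2 w2 20 10) \<inter> interior (rect z4 w4 20 10) = {}"
  by (rule disj_rect[where na="(-12326600000)" and nb="(6201373311)" and c="(111336570062)"]) (simp_all add: z2_def w2_def z4_def w4_def)
lemma p2_5: "interior (rect z2 w2 20 10) \<inter> interior (rect z5 w5 20 10) = {}"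
  by (rule disj_rect[where na="(-124220000)" and nb="(-61423479)" and c="(-4175161235)"]) (simp_all add: z2_def w2_def z5_def w5_def)
lemma p2_6: "interior (rect z2 w2 20 10) \<inter> interior (rect z6 w6 20 10) = {}"
  by (rule disj_rect[where na="(-4245900000)" and nb="(-697233319)" and c="(-58971625937)"]) (simp_all add: z2_def w2_def z6_def w6_def)
lemma p2_7: "interior (rect z2 w2 20 10) \<inter> interior (rect z7 w7 20 10) = {}"
  by (rule disj_rect[where na="(-124220000)" and nb="(-61423479)" and c="(-3460774460)"]) (simp_all add: z2_def w2_def z7_def w7_def)
lemma p2_8: "interior (rect z2 w2 20 10) \<inter> interior (rect z8 w8 20 10) = {}"
  by (rule disj_rect[where na="(-61423479)" and nb="(124220000)" and c="(722813485)"]) (simp_all add: z2_def w2_def z8_def w8_def)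
lemma p2_9: "interior (rect z2 w2 20 10) \<inter> interior (rect z9 w9 20 10) = {}"
  by (rule disj_rect[where na="(-11806600000)" and nb="(6515104911)" and c="(116597757749)"]) (simp_all add: z2_def w2_def z9_def w9_def)
lemma p2_10: "interior (rect z2 w2 20 10) \<inter> interior (rect z10 w10 20 10) = {}"
  by (rule disj_rect[where na="(-6244393911)" and nb="(12256600000)" and c="(110496821519)"]) (simp_all add: z2_def w2_def z10_def w10_def)
lemma p2_11: "interior (rect z2 w2 20 10) \<inter> interior (rect z11 w11 20 10) = {}"
  by (rule disj_rect[where na="(-4787800000)" and nb="(9426924279)" and c="(210254791103)"]) (simp_all add: z2_def w2_def z11_def w11_def)
lemma p2_12: "interior (rect z2 w2 20 10) \<inter> interior (rect z12 w12 20 10) = {}"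
  by (rule disj_rect[where na="(-9963151)" and nb="(19656000)" and c="(330366382)"]) (simp_all add: z2_def w2_def z12_def w12_def)
lemma p2_13: "interior (rect z2 w2 20 10) \<inter> interior (rect z13 w13 20 10) = {}"
  by (rule disj_rect[where na="(-12308200000)" and nb="(6212705319)" and c="(111669814724)"]) (simp_all add: z2_def w2_def z13_def w13_def)
lemma p2_14: "interior (rect z2 w2 20 10) \<inter> interior (rect z14 w14 20 10) = {}"
  by (rule disj_rect[where na="(-1246700000)" and nb="(2344573911)" and c="(64827253067)"]) (simp_all add: z2_def w2_def z14_def w14_def)
lemma p2_15: "interior (rect z2 w2 20 10) \<inter> interior (rect z15 w15 20 10) = {}"
  by (rule disj_rect[where na="(-61423479)" and nb="(124220000)" and c="(4202335731)"]) (simp_all add: z2_def w2_def z15_def w15_def)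
lemma p3_4: "interior (rect z3 w3 20 10) \<inter> interior (rect z4 w4 20 10) = {}"
  by (rule disj_rect[where na="(-12326600000)" and nb="(6201373311)" and c="(415802282403)"]) (simp_all add: z3_def w3_def z4_def w4_def)
lemma p3_5: "interior (rect z3 w3 20 10) \<inter> interior (rect z5 w5 20 10) = {}"
  by (rule disj_rect[where na="(12226200000)" and nb="(6263000839)" and c="(113654238374)"]) (simp_all add: z3_def w3_def z5_def w5_def)
lemma p3_6: "interior (rect z3 w3 20 10) \<inter> interior (rect z6 w6 20 10) = {}"
  by (rule disj_rect[where na="(4245900000)" and nb="(697233319)" and c="(-42666614327)"]) (simp_all add: z3_def w3_def z6_def w6_def)
lemma p3_7: "interior (rect z3 w3 20 10) \<inter> interior (rect z7 w7 20 10) = {}"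
  by (rule disj_rect[where na="(122260000)" and nb="(62631231)" and c="(452276276)"]) (simp_all add: z3_def w3_def z7_def w7_def)
lemma p3_8: "interior (rect z3 w3 20 10) \<inter> interior (rect z8 w8 20 10) = {}"
  by (rule disj_rect[where na="(12470600000)" and nb="(6112103391)" and c="(181073902900)"]) (simp_all add: z3_def w3_def z8_def w8_def)
lemma p3_9: "interior (rect z3 w3 20 10) \<inter> interior (rect z9 w9 20 10) = {}"
  by (rule disj_rect[where na="(-11806600000)" and nb="(6515104911)" and c="(406068123318)"]) (simp_all add: z3_def w3_def z9_def w9_def)
lemma p3_10: "interior (rect z3 w3 20 10) \<inter> interior (rect z10 w10 20 10) = {}"
  by (rule disj_rect[where na="(12256600000)" and nb="(6244393911)" and c="(113830101502)"]) (simp_all add: z3_def w3_def z10_def w10_def)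
lemma p3_11: "interior (rect z3 w3 20 10) \<inter> interior (rect z11 w11 20 10) = {}"
  by (rule disj_rect[where na="(6419054719)" and nb="(11968200000)" and c="(257556233235)"]) (simp_all add: z3_def w3_def z11_def w11_def)
lemma p3_12: "interior (rect z3 w3 20 10) \<inter> interior (rect z12 w12 20 10) = {}"
  by (rule disj_rect[where na="(19656000)" and nb="(9963151)" and c="(294111144)"]) (simp_all add: z3_def w3_def z12_def w12_def)
lemma p3_13: "interior (rect z3 w3 20 10) \<inter> interior (rect z13 w13 20 10) = {}"
  by (rule disj_rect[where na="(6212705319)" and nb="(12308200000)" and c="(255261806937)"]) (simp_all add: z3_def w3_def z13_def w13_def)
lemma p3_14: "interior (rect z3 w3 20 10) \<inter> interior (rect z14 w14 20 10) = {}"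
  by (rule disj_rect[where na="(6419054719)" and nb="(11968200000)" and c="(350546632346)"]) (simp_all add: z3_def w3_def z14_def w14_def)
lemma p3_15: "interior (rect z3 w3 20 10) \<inter> interior (rect z15 w15 20 10) = {}"
  by (rule disj_rect[where na="(1549079431)" and nb="(3083700000)" and c="(108124373370)"]) (simp_all add: z3_def w3_def z15_def w15_def)
lemma p4_5: "interior (rect z4 w4 20 10) \<inter> interior (rect z5 w5 20 10) = {}"
  by (rule disj_rect[where na="(12326600000)" and nb="(-6201373311)" and c="(-184403466079)"]) (simp_all add: z4_def w4_def z5_def w5_def)
lemma p4_6: "interior (rect z4 w4 20 10) \<inter> interior (rect z6 w6 20 10) = {}"
  by (rule disj_rect[where na="(4245900000)" and nb="(697233319)" and c="(-67088807072)"]) (simp_all add: z4_def w4_def z6_def w6_def)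
lemma p4_7: "interior (rect z4 w4 20 10) \<inter> interior (rect z7 w7 20 10) = {}"
  by (rule disj_rect[where na="(122260000)" and nb="(62631231)" and c="(-239188609)"]) (simp_all add: z4_def w4_def z7_def w7_def)
lemma p4_8: "interior (rect z4 w4 20 10) \<inter> interior (rect z8 w8 20 10) = {}"
  by (rule disj_rect[where na="(12470600000)" and nb="(6112103391)" and c="(110467616774)"]) (simp_all add: z4_def w4_def z8_def w8_def)
lemma p4_9: "interior (rect z4 w4 20 10) \<inter> interior (rect z9 w9 20 10) = {}"
  by (rule disj_rect[where na="(6515104911)" and nb="(11806600000)" and c="(56302304477)"]) (simp_all add: z4_def w4_def z9_def w9_def)
lemma p4_10: "interior (rect z4 w4 20 10) \<inter> interior (rect z10 w10 20 10) = {}"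
  by (rule disj_rect[where na="(12256600000)" and nb="(6244393911)" and c="(44501034402)"]) (simp_all add: z4_def w4_def z10_def w10_def)
lemma p4_11: "interior (rect z4 w4 20 10) \<inter> interior (rect z11 w11 20 10) = {}"
  by (rule disj_rect[where na="(9426924279)" and nb="(4787800000)" and c="(-17762501423)"]) (simp_all add: z4_def w4_def z11_def w11_def)
lemma p4_12: "interior (rect z4 w4 20 10) \<inter> interior (rect z12 w12 20 10) = {}"
  by (rule disj_rect[where na="(19656000)" and nb="(9963151)" and c="(182913495)"]) (simp_all add: z4_def w4_def z12_def w12_def)
lemma p4_13: "interior (rect z4 w4 20 10) \<inter> interior (rect z13 w13 20 10) = {}"
  by (rule disj_rect[where na="(6201373311)" and nb="(12326600000)" and c="(221672715075)"]) (simp_all add: z4_def w4_def z13_def w13_def)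
lemma p4_14: "interior (rect z4 w4 20 10) \<inter> interior (rect z14 w14 20 10) = {}"
  by (rule disj_rect[where na="(6201373311)" and nb="(12326600000)" and c="(331685891457)"]) (simp_all add: z4_def w4_def z14_def w14_def)
lemma p4_15: "interior (rect z4 w4 20 10) \<inter> interior (rect z15 w15 20 10) = {}"
  by (rule disj_rect[where na="(6201373311)" and nb="(12326600000)" and c="(397704634089)"]) (simp_all add: z4_def w4_def z15_def w15_def)
lemma p5_6: "interior (rect z5 w5 20 10) \<inter> interior (rect z6 w6 20 10) = {}"
  by (rule disj_rect[where na="(-4245900000)" and nb="(-697233319)" and c="(-34337185468)"]) (simp_all add: z5_def w5_def z6_def w6_def)
lemma p5_7: "interior (rect z5 w5 20 10) \<inter> interior (rect z7 w7 20 10) = {}"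
  by (rule disj_rect[where na="(-62631231)" and nb="(122260000)" and c="(1733795512)"]) (simp_all add: z5_def w5_def z7_def w7_def)
lemma p5_8: "interior (rect z5 w5 20 10) \<inter> interior (rect z8 w8 20 10) = {}"
  by (rule disj_rect[where na="(12226200000)" and nb="(6263000839)" and c="(412023377260)"]) (simp_all add: z5_def w5_def z8_def w8_def)
lemma p5_9: "interior (rect z5 w5 20 10) \<inter> interior (rect z9 w9 20 10) = {}"
  by (rule disj_rect[where na="(-11806600000)" and nb="(6515104911)" and c="(186690640120)"]) (simp_all add: z5_def w5_def z9_def w9_def)
lemma p5_10: "interior (rect z5 w5 20 10) \<inter> interior (rect z10 w10 20 10) = {}"
  by (rule disj_rect[where na="(-6244393911)" and nb="(12256600000)" and c="(149379302511)"]) (simp_all add: z5_def w5_def z10_def w10_def)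
lemma p5_11: "interior (rect z5 w5 20 10) \<inter> interior (rect z11 w11 20 10) = {}"
  by (rule disj_rect[where na="(-4787800000)" and nb="(9426924279)" and c="(240139814173)"]) (simp_all add: z5_def w5_def z11_def w11_def)
lemma p5_12: "interior (rect z5 w5 20 10) \<inter> interior (rect z12 w12 20 10) = {}"
  by (rule disj_rect[where na="(-9963151)" and nb="(19656000)" and c="(392651943)"]) (simp_all add: z5_def w5_def z12_def w12_def)
lemma p5_13: "interior (rect z5 w5 20 10) \<inter> interior (rect z13 w13 20 10) = {}"
  by (rule disj_rect[where na="(-12308200000)" and nb="(6212705319)" and c="(184631519856)"]) (simp_all add: z5_def w5_def z13_def w13_def)
lemma p5_14: "interior (rect z5 w5 20 10) \<inter> interior (rect z14 w14 20 10) = {}"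
  by (rule disj_rect[where na="(-6263000839)" and nb="(12226200000)" and c="(379526859879)"]) (simp_all add: z5_def w5_def z14_def w14_def)
lemma p5_15: "interior (rect z5 w5 20 10) \<inter> interior (rect z15 w15 20 10) = {}"
  by (rule disj_rect[where na="(-6263000839)" and nb="(12226200000)" and c="(450120533801)"]) (simp_all add: z5_def w5_def z15_def w15_def)
lemma p6_7: "interior (rect z6 w6 20 10) \<inter> interior (rect z7 w7 20 10) = {}"
  by (rule disj_rect[where na="(122260000)" and nb="(62631231)" and c="(1363687397)"]) (simp_all add: z6_def w6_def z7_def w7_def)
lemma p6_8: "interior (rect z6 w6 20 10) \<inter> interior (rect z8 w8 20 10) = {}"
  by (rule disj_rect[where na="(4245900000)" and nb="(697233319)" and c="(45968823082)"]) (simp_all add: z6_def w6_def z8_def w8_def)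
lemma p6_9: "interior (rect z6 w6 20 10) \<inter> interior (rect z9 w9 20 10) = {}"
  by (rule disj_rect[where na="(-11806600000)" and nb="(6515104911)" and c="(389655540212)"]) (simp_all add: z6_def w6_def z9_def w9_def)
lemma p6_10: "interior (rect z6 w6 20 10) \<inter> interior (rect z10 w10 20 10) = {}"
  by (rule disj_rect[where na="(12256600000)" and nb="(6244393911)" and c="(204963685317)"]) (simp_all add: z6_def w6_def z10_def w10_def)
lemma p6_11: "interior (rect z6 w6 20 10) \<inter> interior (rect z11 w11 20 10) = {}"
  by (rule disj_rect[where na="(-697233319)" and nb="(4245900000)" and c="(146959783544)"]) (simp_all add: z6_def w6_def z11_def w11_def)
lemma p6_12: "interior (rect z6 w6 20 10) \<inter> interior (rect z12 w12 20 10) = {}"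
  by (rule disj_rect[where na="(19656000)" and nb="(9963151)" and c="(439913240)"]) (simp_all add: z6_def w6_def z12_def w12_def)
lemma p6_13: "interior (rect z6 w6 20 10) \<inter> interior (rect z13 w13 20 10) = {}"
  by (rule disj_rect[where na="(-697233319)" and nb="(4245900000)" and c="(153377567917)"]) (simp_all add: z6_def w6_def z13_def w13_def)
lemma p6_14: "interior (rect z6 w6 20 10) \<inter> interior (rect z14 w14 20 10) = {}"
  by (rule disj_rect[where na="(-697233319)" and nb="(4245900000)" and c="(173799434031)"]) (simp_all add: z6_def w6_def z14_def w14_def)
lemma p6_15: "interior (rect z6 w6 20 10) \<inter> interior (rect z15 w15 20 10) = {}"
  by (rule disj_rect[where na="(-697233319)" and nb="(4245900000)" and c="(197711338488)"]) (simp_all add: z6_def w6_def z15_def w15_def)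
lemma p7_8: "interior (rect z7 w7 20 10) \<inter> interior (rect z8 w8 20 10) = {}"
  by (rule disj_rect[where na="(12470600000)" and nb="(6112103391)" and c="(344877522971)"]) (simp_all add: z7_def w7_def z8_def w8_def)
lemma p7_9: "interior (rect z7 w7 20 10) \<inter> interior (rect z9 w9 20 10) = {}"
  by (rule disj_rect[where na="(-11806600000)" and nb="(6515104911)" and c="(361538509912)"]) (simp_all add: z7_def w7_def z9_def w9_def)
lemma p7_10: "interior (rect z7 w7 20 10) \<inter> interior (rect z10 w10 20 10) = {}"
  by (rule disj_rect[where na="(12256600000)" and nb="(6244393911)" and c="(275371658910)"]) (simp_all add: z7_def w7_def z10_def w10_def)
lemma p7_11: "interior (rect z7 w7 20 10) \<inter> interior (rect z11 w11 20 10) = {}"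
  by (rule disj_rect[where na="(-4787800000)" and nb="(9426924279)" and c="(369784660181)"]) (simp_all add: z7_def w7_def z11_def w11_def)
lemma p7_12: "interior (rect z7 w7 20 10) \<inter> interior (rect z12 w12 20 10) = {}"
  by (rule disj_rect[where na="(122260000)" and nb="(62631231)" and c="(3459339202)"]) (simp_all add: z7_def w7_def z12_def w12_def)
lemma p7_13: "interior (rect z7 w7 20 10) \<inter> interior (rect z13 w13 20 10) = {}"
  by (rule disj_rect[where na="(-12308200000)" and nb="(6212705319)" and c="(361893443080)"]) (simp_all add: z7_def w7_def z13_def w13_def)
lemma p7_14: "interior (rect z7 w7 20 10) \<inter> interior (rect z14 w14 20 10) = {}"
  by (rule disj_rect[where na="(-62631231)" and nb="(122260000)" and c="(5481967698)"]) (simp_all add: z7_def w7_def z14_def w14_def)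
lemma p7_15: "interior (rect z7 w7 20 10) \<inter> interior (rect z15 w15 20 10) = {}"
  by (rule disj_rect[where na="(-62631231)" and nb="(122260000)" and c="(6187893808)"]) (simp_all add: z7_def w7_def z15_def w15_def)
lemma p8_9: "interior (rect z8 w8 20 10) \<inter> interior (rect z9 w9 20 10) = {}"
  by (rule disj_rect[where na="(-12470600000)" and nb="(-6112103391)" and c="(-224569171180)"]) (simp_all add: z8_def w8_def z9_def w9_def)
lemma p8_10: "interior (rect z8 w8 20 10) \<inter> interior (rect z10 w10 20 10) = {}"
  by (rule disj_rect[where na="(-12470600000)" and nb="(-6112103391)" and c="(-415026370402)"]) (simp_all add: z8_def w8_def z10_def w10_def)
lemma p8_11: "interior (rect z8 w8 20 10) \<inter> interior (rect z11 w11 20 10) = {}"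
  by (rule disj_rect[where na="(-4787800000)" and nb="(9426924279)" and c="(317219344032)"]) (simp_all add: z8_def w8_def z11_def w11_def)
lemma p8_12: "interior (rect z8 w8 20 10) \<inter> interior (rect z12 w12 20 10) = {}"
  by (rule disj_rect[where na="(-9963151)" and nb="(19656000)" and c="(553307016)"]) (simp_all add: z8_def w8_def z12_def w12_def)
lemma p8_13: "interior (rect z8 w8 20 10) \<inter> interior (rect z13 w13 20 10) = {}"
  by (rule disj_rect[where na="(-12308200000)" and nb="(6212705319)" and c="(223777298734)"]) (simp_all add: z8_def w8_def z13_def w13_def)
lemma p8_14: "interior (rect z8 w8 20 10) \<inter> interior (rect z14 w14 20 10) = {}"
  by (rule disj_rect[where na="(-1246700000)" and nb="(2344573911)" and c="(91684709750)"]) (simp_all add: z8_def w8_def z14_def w14_def)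
lemma p8_15: "interior (rect z8 w8 20 10) \<inter> interior (rect z15 w15 20 10) = {}"
  by (rule disj_rect[where na="(-6112103391)" and nb="(12470600000)" and c="(562950340025)"]) (simp_all add: z8_def w8_def z15_def w15_def)
lemma p9_10: "interior (rect z9 w9 20 10) \<inter> interior (rect z10 w10 20 10) = {}"
  by (rule disj_rect[where na="(12256600000)" and nb="(6244393911)" and c="(158718170651)"]) (simp_all add: z9_def w9_def z10_def w10_def)
lemma p9_11: "interior (rect z9 w9 20 10) \<inter> interior (rect z11 w11 20 10) = {}"
  by (rule disj_rect[where na="(9426924279)" and nb="(4787800000)" and c="(69954639314)"]) (simp_all add: z9_def w9_def z11_def w11_def)
lemma p9_12: "interior (rect z9 w9 20 10) \<inter> interior (rect z12 w12 20 10) = {}"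
  by (rule disj_rect[where na="(19656000)" and nb="(9963151)" and c="(365638214)"]) (simp_all add: z9_def w9_def z12_def w12_def)
lemma p9_13: "interior (rect z9 w9 20 10) \<inter> interior (rect z13 w13 20 10) = {}"
  by (rule disj_rect[where na="(6212705319)" and nb="(12308200000)" and c="(361302393797)"]) (simp_all add: z9_def w9_def z13_def w13_def)
lemma p9_14: "interior (rect z9 w9 20 10) \<inter> interior (rect z14 w14 20 10) = {}"
  by (rule disj_rect[where na="(6515104911)" and nb="(11806600000)" and c="(444805401234)"]) (simp_all add: z9_def w9_def z14_def w14_def)
lemma p9_15: "interior (rect z9 w9 20 10) \<inter> interior (rect z15 w15 20 10) = {}"
  by (rule disj_rect[where na="(1549079431)" and nb="(3083700000)" and c="(134698552675)"]) (simp_all add: z9_def w9_def z15_def w15_def)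
lemma p10_11: "interior (rect z10 w10 20 10) \<inter> interior (rect z11 w11 20 10) = {}"
  by (rule disj_rect[where na="(-4787800000)" and nb="(9426924279)" and c="(350635434542)"]) (simp_all add: z10_def w10_def z11_def w11_def)
lemma p10_12: "interior (rect z10 w10 20 10) \<inter> interior (rect z12 w12 20 10) = {}"
  by (rule disj_rect[where na="(12256600000)" and nb="(6244393911)" and c="(414895120865)"]) (simp_all add: z10_def w10_def z12_def w12_def)
lemma p10_13: "interior (rect z10 w10 20 10) \<inter> interior (rect z13 w13 20 10) = {}"
  by (rule disj_rect[where na="(-12308200000)" and nb="(6212705319)" and c="(300694983221)"]) (simp_all add: z10_def w10_def z13_def w13_def)
lemma p10_14: "interior (rect z10 w10 20 10) \<inter> interior (rect z14 w14 20 10) = {}"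
  by (rule disj_rect[where na="(-6244393911)" and nb="(12256600000)" and c="(524556878890)"]) (simp_all add: z10_def w10_def z14_def w14_def)
lemma p10_15: "interior (rect z10 w10 20 10) \<inter> interior (rect z15 w15 20 10) = {}"
  by (rule disj_rect[where na="(-6244393911)" and nb="(12256600000)" and c="(595312116455)"]) (simp_all add: z10_def w10_def z15_def w15_def)
lemma p11_12: "interior (rect z11 w11 20 10) \<inter> interior (rect z12 w12 20 10) = {}"
  by (rule disj_rect[where na="(19656000)" and nb="(9963151)" and c="(666044438)"]) (simp_all add: z11_def w11_def z12_def w12_def)
lemma p11_13: "interior (rect z11 w11 20 10) \<inter> interior (rect z13 w13 20 10) = {}"
  by (rule disj_rect[where na="(-12308200000)" and nb="(6212705319)" and c="(416307306605)"]) (simp_all add: z11_def w11_def z13_def w13_def)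
lemma p11_14: "interior (rect z11 w11 20 10) \<inter> interior (rect z14 w14 20 10) = {}"
  by (rule disj_rect[where na="(-4787800000)" and nb="(9426924279)" and c="(475583617851)"]) (simp_all add: z11_def w11_def z14_def w14_def)
lemma p11_15: "interior (rect z11 w11 20 10) \<inter> interior (rect z15 w15 20 10) = {}"
  by (rule disj_rect[where na="(-4787800000)" and nb="(9426924279)" and c="(529997515964)"]) (simp_all add: z11_def w11_def z15_def w15_def)
lemma p12_13: "interior (rect z12 w12 20 10) \<inter> interior (rect z13 w13 20 10) = {}"
  by (rule disj_rect[where na="(-12308200000)" and nb="(6212705319)" and c="(335528034032)"]) (simp_all add: z12_def w12_def z13_def w13_def)
lemma p12_14: "interior (rect z12 w12 20 10) \<inter> interior (rect z14 w14 20 10) = {}"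
  by (rule disj_rect[where na="(-1246700000)" and nb="(2344573911)" and c="(118385480862)"]) (simp_all add: z12_def w12_def z14_def w14_def)
lemma p12_15: "interior (rect z12 w12 20 10) \<inter> interior (rect z15 w15 20 10) = {}"
  by (rule disj_rect[where na="(-3083700000)" and nb="(1549079431)" and c="(83605562067)"]) (simp_all add: z12_def w12_def z15_def w15_def)
lemma p13_14: "interior (rect z13 w13 20 10) \<inter> interior (rect z14 w14 20 10) = {}"
  by (rule disj_rect[where na="(2344573911)" and nb="(1246700000)" and c="(55229715466)"]) (simp_all add: z13_def w13_def z14_def w14_def)
lemma p13_15: "interior (rect z13 w13 20 10) \<inter> interior (rect z15 w15 20 10) = {}"
  by (rule disj_rect[where na="(6212705319)" and nb="(12308200000)" and c="(682688657572)"]) (simp_all add: z13_def w13_def z15_def w15_def)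
lemma p14_15: "interior (rect z14 w14 20 10) \<inter> interior (rect z15 w15 20 10) = {}"
  by (rule disj_rect[where na="(-1246700000)" and nb="(2344573911)" and c="(145266066416)"]) (simp_all add: z14_def w14_def z15_def w15_def)
definition zf :: "nat \<Rightarrow> complex" where "zf i = (if i=0 then z0 else if i=1 then z1 else if i=2 then z2 else if i=3 then z3 else if i=4 then z4 else if i=5 then z5 else if i=6 then z6 else if i=7 then z7 else if i=8 then z8 else if i=9 then z9 else if i=10 then z10 else if i=11 then z11 else if i=12 then z12 else if i=13 then z13 else if i=14 then z14 else  z15)"
definition wf :: "nat \<Rightarrow> complex" where "wf i = (if i=0 then w0 else if i=1 then w1 else if i=2 then w2 else if i=3 then w3 else if i=4 then w4 else if i=5 then w5 else if i=6 then w6 else if i=7 then w7 else if i=8 then w8 else if i=9 then w9 else if i=10 then w10 else if i=11 then w11 else if i=12 then w12 else if i=13 then w13 else if i=14 then w14 else  w15)"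
lemma cases16: "(i::nat) < 16 \<Longrightarrow> i=0 \<or> i=1 \<or> i=2 \<or> i=3 \<or> i=4 \<or> i=5 \<or> i=6 \<or> i=7 \<or> i=8 \<or> i=9 \<or> i=10 \<or> i=11 \<or> i=12 \<or> i=13 \<or> i=14 \<or> i=15" by presburger
lemmas allc = n0 c0 n1 c1 n2 c2 n3 c3 n4 c4 n5 c5 n6 c6 n7 c7 n8 c8 n9 c9 n10 c10 n11 c11 n12 c12 n13 c13 n14 c14 n15 c15
lemmas allp = p0_1 p0_2 p0_3 p0_4 p0_5 p0_6 p0_7 p0_8 p0_9 p0_10 p0_11 p0_12 p0_13 p0_14 p0_15 p1_2 p1_3 p1_4 p1_5 p1_6 p1_7 p1_8 p1_9 p1_10 p1_11 p1_12 p1_13 p1_14 p1_15 p2_3 p2_4 p2_5 p2_6 p2_7 p2_8 p2_9 p2_10 p2_11 p2_12 p2_13 p2_14 p2_15 p3_4 p3_5 p3_6 p3_7 p3_8 p3_9 p3_10 p3_11 p3_12 p3_13 p3_14 p3_15 p4_5 p4_6 p4_7 p4_8 p4_9 p4_10 p4_11 p4_12 p4_13 p4_14 p4_15 p5_6 p5_7 p5_8 p5_9 p5_10 p5_11 p5_12 p5_13 p5_14 p5_15 p6_7 p6_8 p6_9 p6_10 p6_11 p6_12 p6_13 p6_14 p6_15 p7_8 p7_9 p7_10 p7_11 p7_12 p7_13 p7_14 p7_15 p8_9 p8_10 p8_11 p8_12 p8_13 p8_14 p8_15 p9_10 p9_11 p9_12 p9_13 p9_14 p9_15 p10_11 p10_12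 p10_13 p10_14 p10_15 p11_12 p11_13 p11_14 p11_15 p12_13 p12_14 p12_15 p13_14 p13_15 p14_15

lemma Pairs: "i<16 \<Longrightarrow> j<16 \<Longrightarrow> i<j \<Longrightarrow> interior (rect (zf i) (wf i) 20 10) \<inter> interior (rect (zf j) (wf j) 20 10) = {}"
proof -
  assume a: "i<16" "j<16" "i<j"
  from cases16[OF a(1)] cases16[OF a(2)] a(3) show ?thesis
    by (elim disjE) (simp_all add: zf_def wf_def allp)
qed

theorem mainTheorem2:
  shows "\<exists>z w :: nat \<Rightarrow> complex.
     (\<forall>i<16. norm (w i) = 1 \<and> rect (z i) (w i) 20 10 \<subseteq> Delta) \<and>
     (\<forall>i<16. \<forall>j<16. i \<noteq> j \<longrightarrow>
        interior (rect (z i) (w i) 20 10) \<inter> interior (rect (z j) (w j) 20 10) = {})"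
proof (intro exI conjI allI impI)
  fix i :: nat assume "i<16"
  from cases16[OF this] show "norm (wf i) = 1" by (elim disjE) (simp_all add: wf_def allc)
next
  fix i :: nat assume "i<16"
  from cases16[OF this] show "rect (zf i) (wf i) 20 10 \<subseteq> Delta" by (elim disjE) (simp_all add: zf_def wf_def allc)
next
  fix i j :: nat assume a: "i<16" "j<16" "i\<noteq>j"
  show "interior (rect (zf i) (wf i) 20 10) \<inter> interior (rect (zf j) (wf j) 20 10) = {}"
  proof (cases "i<j")
    case True then show ?thesis using Pairs a by blast
  next
    case False then have "j<i" using a by simp
    then show ?thesis using Pairs[of j i] a by (simp add: Int_commute)
  qed
qed

end
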